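(* Let $R$ be a lattice diagram of a knot or link. Then $R$ is the projection, under the orthogonal projection $\pi_{xy}\colon\mathbb{R}^3\to\mathbb{R}^2$ onto the $xy$-plane, of a proper lattice stick knot or link if and only if $R$ does not have a Celtic configuration.
   Context: The $\mathbb{Z}^3$ lattice is the graph in $\mathbb{R}^3$ whose vertices are the points with integer coordinates and whose edges are the unit-length segments parallel to the coordinate axes; the $\mathbb{Z}^2$ lattice is defined analogously in the plane. An $x$-edge, $y$-edge, $z$-edge is a lattice edge parallel to the corresponding axis. A $z$-stick is a segment that is a union of finitely many $z$-edges; a single lattice point is regarded as a trivial $z$-stick. A lattice stick knot or link is a knot or link contained in the $\mathbb{Z}^3$ lattice. It is proper if: the inverse image under $\pi_{xy}$ of any point of its projection that is not a vertex of the $\mathbb{Z}^2$ lattice is a single point; the inverse image of a vertex of the projection that is not a crossing is a single (possibly trivial) $z$-stick; and the inverse image of a vertex of the projection that is a crossing is two (possibly trivial) disjoint $z$-sticks, the over-strand at the crossing being the one whose $z$-stick lies higher. A lattice diagram of a knot or link is a knot or link diagram (a closed curve or curves in the plane with finitely many transverse double points, the crossings, each with over/under information) that is contained in the $\mathbb{Z}^2$ lattice and all of whose crossings are at vertices of the $\mathbb{Z}^2$ lattice. At a crossing $c$, the $x$-strand (resp. $y$-strand) is the union of the two $x$-edges (resp. $y$-edges) of $R$ having $c$ as an endpoint; $c$ is an $x$-crossing (resp. $y$-crossing) if the over-strand at $c$ is the $x$-strand (resp. $y$-strand); this is the crossing type of $c$. A Celtic configuration is a set of four crossings of $R$ located at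 the four vertices of a unit square of the $\mathbb{Z}^2$ lattice such that any two of them that are endpoints of a common side of the square have opposite crossing types (so diagonally opposite ones have the same type). *)

theory Defs
  imports Main
begin

type_synonym pt2 = "int \<times> int"
type_synonym pt3 = "int \<times> int \<times> int"

text \<open>A lattice edge is encoded by its lower endpoint and its direction:
  the edge (p, D) joins p to p + (unit vector in direction D).\<close>
datatype dir2 = X2 | Y2
datatype dir3 = X3 | Y3 | Z3

type_synonym edge2 = "pt2 \<times> dir2"
type_synonym edge3 = "pt3 \<times> dir3"

fun tip2 :: "edge2 \<Rightarrow> pt2" where
  "tip2 ((x,y), X2) = (x+1, y)"
| "tip2 ((x,y), Y2) = (x, y+1)"

fun tip3 :: "edge3 \<Rightarrow> pt3" where
  "tip3 ((x,y,z), X3) = (x+1, y, z)"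
| "tip3 ((x,y,z), Y3) = (x, y+1, z)"
| "tip3 ((x,y,z), Z3) = (x, y, z+1)"

definition ends2 :: "edge2 \<Rightarrow> pt2 set" where
  "ends2 e = {fst e, tip2 e}"

definition ends3 :: "edge3 \<Rightarrow> pt3 set" where
  "ends3 e = {fst e, tip3 e}"

definition verts2 :: "edge2 set \<Rightarrow> pt2 set" where
  "verts2 E = (\<Union>e\<in>E. ends2 e)"

definition verts3 :: "edge3 set \<Rightarrow> pt3 set" where
  "verts3 L = (\<Union>e\<in>L. ends3 e)"

definition deg2 :: "edge2 set \<Rightarrow> pt2 \<Rightarrow> nat" where
  "deg2 E v = card {e\<in>E. v \<in> ends2 e}"

definition deg3 :: "edge3 set \<Rightarrow> pt3 \<Rightarrow> nat" where
  "deg3 L v = card {e\<in>L. v \<in> ends3 e}"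

text \<open>A lattice diagram R is given by its set E of Z^2-edges (finite, nonempty,
  no edge traversed twice since there are only finitely many double points)
  together with the crossing information ct: at a crossing c, ct c = True means
  c is an x-crossing (over-strand is the x-strand), False means a y-crossing.
  Every vertex of the diagram has degree 2 (ordinary point) or 4 (a crossing,
  where, crossings being transverse, the curve goes straight through along its
  x-strand and its y-strand).\<close>
definition lattice_diagram :: "edge2 set \<Rightarrow> bool" where
  "lattice_diagram E \<longleftrightarrow> finite E \<and> E \<noteq> {} \<and>
     (\<forall>v\<in>verts2 E. deg2 E v = 2 \<or> deg2 E v = 4)"

definition crossing :: "edge2 set \<Rightarrow> pt2 \<Rightarrow> bool" where
  "crossing E v \<longleftrightarrow> v \<in> verts2 E \<and> deg2 E v = 4"

definition celtic_configuration :: "edge2 set \<Rightarrow> (pt2 \<Rightarrow> bool) \<Rightarrow> bool" where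
  "celtic_configuration E ct \<longleftrightarrow> (\<exists>x y.
     crossing E (x,y) \<and> crossing E (x+1,y) \<and> crossing E (x,y+1) \<and> crossing E (x+1,y+1) \<and>
     ct (x,y) \<noteq> ct (x+1,y) \<and> ct (x,y) \<noteq> ct (x,y+1) \<and>
     ct (x+1,y) \<noteq> ct (x+1,y+1) \<and> ct (x,y+1) \<noteq> ct (x+1,y+1))"

text \<open>A lattice stick knot or link: a finite nonempty union of Z^3-edges forming
  disjoint closed curves, i.e. every vertex used has degree exactly 2.\<close>
definition lattice_link :: "edge3 set \<Rightarrow> bool" where
  "lattice_link L \<longleftrightarrow> finite L \<and> L \<noteq> {} \<and> (\<forall>v\<in>verts3 L. deg3 L v = 2)"

fun lift :: "edge2 \<Rightarrow> int \<Rightarrow> edge3" where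
  "lift ((x,y), X2) h = ((x,y,h), X3)"
| "lift ((x,y), Y2) h = ((x,y,h), Y3)"

definition fibV :: "edge3 set \<Rightarrow> pt2 \<Rightarrow> int set" where
  "fibV L v = {z. (fst v, snd v, z) \<in> verts3 L}"

definition fibE :: "edge3 set \<Rightarrow> pt2 \<Rightarrow> int set" where
  "fibE L v = {z. ((fst v, snd v, z), Z3) \<in> L}"

definition is_stick_fibre :: "edge3 set \<Rightarrow> pt2 \<Rightarrow> int \<Rightarrow> int \<Rightarrow> bool" where
  "is_stick_fibre L v a b \<longleftrightarrow> a \<le> b \<and> fibV L v = {a..b} \<and> fibE L v = {a..<b}"

definition is_two_stick_fibre ::
    "edge3 set \<Rightarrow> pt2 \<Rightarrow> int \<Rightarrow> int \<Rightarrow> int \<Rightarrow> int \<Rightarrow> bool" where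
  "is_two_stick_fibre L v a1 b1 a2 b2 \<longleftrightarrow>
     a1 \<le> b1 \<and> b1 < a2 \<and> a2 \<le> b2 \<and>
     fibV L v = {a1..b1} \<union> {a2..b2} \<and> fibE L v = {a1..<b1} \<union> {a2..<b2}"

definition lifted_in :: "edge3 set \<Rightarrow> edge2 \<Rightarrow> int set \<Rightarrow> bool" where
  "lifted_in L e I \<longleftrightarrow> (\<forall>h. lift e h \<in> L \<longrightarrow> h \<in> I)"

definition x_strand_in :: "edge3 set \<Rightarrow> pt2 \<Rightarrow> int set \<Rightarrow> bool" where
  "x_strand_in L c I \<longleftrightarrow>
     lifted_in L ((fst c - 1, snd c), X2) I \<and> lifted_in L ((fst c, snd c), X2) I"

definition y_strand_in :: "edge3 set \<Rightarrow> pt2 \<Rightarrow> int set \<Rightarrow> bool" where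
  "y_strand_in L c I \<longleftrightarrow>
     lifted_in L ((fst c, snd c - 1), Y2) I \<and> lifted_in L ((fst c, snd c), Y2) I"

text \<open>L is a proper lattice stick knot/link whose projection under pi_xy is the
  lattice diagram (E, ct):
  * L is a lattice stick link;
  * every horizontal edge of L lies over an edge of E, and over each edge of E
    there is exactly one edge of L (so pi_xy(L) = |R|, and the inverse image of
    every non-vertex point of the projection is a single point);
  * every vertex of L lies over a vertex of R (z-edges project to vertices of R);
  * over a non-crossing vertex the inverse image is a single z-stick;
  * over a crossing c the inverse image is two disjoint z-sticks, one carrying
    the x-strand and the other the y-strand (so the projection has the
    x-/y-strands of R at c), and the higher stick carries the over-strand of R.\<close>
definition proper_lift :: "edge3 set \<Rightarrow> edge2 set \<Rightarrow> (pt2 \<Rightarrow> bool) \<Rightarrow> bool" where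
  "proper_lift L E ct \<longleftrightarrow>
     lattice_link L \<and>
     (\<forall>e3\<in>L. snd e3 \<noteq> Z3 \<longrightarrow> (\<exists>e\<in>E. \<exists>h. e3 = lift e h)) \<and>
     (\<forall>e\<in>E. \<exists>!h. lift e h \<in> L) \<and>
     (\<forall>x y z. (x,y,z) \<in> verts3 L \<longrightarrow> (x,y) \<in> verts2 E) \<and>
     (\<forall>v\<in>verts2 E. \<not> crossing E v \<longrightarrow> (\<exists>a b. is_stick_fibre L v a b)) \<and>
     (\<forall>c. crossing E c \<longrightarrow> (\<exists>a1 b1 a2 b2. is_two_stick_fibre L c a1 b1 a2 b2 \<and>
        ((ct c \<and> x_strand_in L c {a2..b2} \<and> y_strand_in L c {a1..b1}) \<or>
         (\<not> ct c \<and> y_strand_in L c {a2..b2} \<and> x_strand_in L c {a1..b1}))))"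

end

theory Submission
  imports Defs
begin


definition inc :: "pt2 \<Rightarrow> edge2 set" where
  "inc v = {((fst v - 1, snd v), X2), ((fst v, snd v), X2), ((fst v, snd v - 1), Y2), ((fst v, snd v), Y2)}"

lemma mem_ends2: "v \<in> ends2 e \<longleftrightarrow> e \<in> inc v"
  apply (cases e) apply (case_tac a) apply (case_tac b)
  apply (cases v) apply (auto simp: ends2_def inc_def)
  done

lemma card_inc: "card (inc v) = 4"
  by (cases v) (simp add: inc_def)

lemma deg2_inc: "deg2 E v = card (E \<inter> inc v)"
  unfolding deg2_def by (rule arg_cong[where f=card]) (auto simp: mem_ends2)

lemma verts2_inc: "v \<in> verts2 E \<longleftrightarrow> E \<inter> inc v \<noteq> {}"
  unfolding verts2_def by (auto simp: mem_ends2)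

lemma crossing_inc: "crossing E v \<Longrightarrow> inc v \<subseteq> E"
proof -
  assume c: "crossing E v"
  hence "card (E \<inter> inc v) = card (inc v)" by (simp add: crossing_def deg2_inc card_inc)
  hence "E \<inter> inc v = inc v" by (metis card_subset_eq finite.emptyI finite.insertI inc_def inf_le2)
  thus ?thesis by blast
qed

lemma inc_crossing: "inc v \<subseteq> E \<Longrightarrow> crossing E v"
  unfolding crossing_def
  by (metis Int_absorb1 card_inc deg2_inc empty_not_insert inc_def verts2_inc)



lemma strand_order:
  assumes P: "proper_lift L E ct" and c: "crossing E c"
    and ex: "ex \<in> {((fst c - 1, snd c), X2), ((fst c, snd c), X2)}" and hx: "lift ex hx \<in> L"
    and ey: "ey \<in> {((fst c, snd c - 1), Y2), ((fst c, snd c), Y2)}" and hy: "lift ey hy \<in> L"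
  shows "(ct c \<longrightarrow> hy < hx) \<and> (\<not> ct c \<longrightarrow> hx < hy)"
proof -
  from P c obtain a1 b1 a2 b2 where t: "is_two_stick_fibre L c a1 b1 a2 b2"
    and s: "(ct c \<and> x_strand_in L c {a2..b2} \<and> y_strand_in L c {a1..b1}) \<or>
         (\<not> ct c \<and> y_strand_in L c {a2..b2} \<and> x_strand_in L c {a1..b1})"
    unfolding proper_lift_def by blast
  from t have o: "b1 < a2" unfolding is_two_stick_fibre_def by simp
  show ?thesis
    using s ex ey hx hy o unfolding x_strand_in_def y_strand_in_def lifted_in_def
    by (elim disjE conjE; simp; fastforce)
qed

lemma lift_direction:
  assumes "proper_lift L E ct" "lattice_diagram E" "celtic_configuration E ct"
  shows False
proof -
  from assms(3) obtain x y where cr: "crossing E (x,y)" "crossing E (x+1,y)" "crossing E (x,y+1)" "crossing E (x+1,y+1)"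
    and ct: "ct (x,y) \<noteq> ct (x+1,y)" "ct (x,y) \<noteq> ct (x,y+1)"
     "ct (x+1,y) \<noteq> ct (x+1,y+1)" "ct (x,y+1) \<noteq> ct (x+1,y+1)"
    unfolding celtic_configuration_def by blast
  have inE: "((x,y),X2) \<in> E" "((x,y+1),X2) \<in> E" "((x,y),Y2) \<in> E" "((x+1,y),Y2) \<in> E"
    using crossing_inc[OF cr(1)] crossing_inc[OF cr(4)] by (auto simp: inc_def)
  have ex: "\<And>e. e \<in> E \<Longrightarrow> \<exists>h. lift e h \<in> L" using assms(1) unfolding proper_lift_def by blast
  obtain hB where hB: "lift ((x,y),X2) hB \<in> L" using ex inE by blast
  obtain hT where hT: "lift ((x,y+1),X2) hT \<in> L" using ex inE by blast
  obtain hL where hL: "lift ((x,y),Y2) hL \<in> L" using ex inE by blast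
  obtain hR where hR: "lift ((x+1,y),Y2) hR \<in> L" using ex inE by blast
  have 1: "(ct (x,y) \<longrightarrow> hL < hB) \<and> (\<not> ct (x,y) \<longrightarrow> hB < hL)"
    by (rule strand_order[OF assms(1) cr(1) _ hB _ hL]) auto
  have 2: "(ct (x+1,y) \<longrightarrow> hR < hB) \<and> (\<not> ct (x+1,y) \<longrightarrow> hB < hR)"
    by (rule strand_order[OF assms(1) cr(2) _ hB _ hR]) auto
  have 3: "(ct (x,y+1) \<longrightarrow> hL < hT) \<and> (\<not> ct (x,y+1) \<longrightarrow> hT < hL)"
    by (rule strand_order[OF assms(1) cr(3) _ hT _ hL]) auto
  have 4: "(ct (x+1,y+1) \<longrightarrow> hR < hT) \<and> (\<not> ct (x+1,y+1) \<longrightarrow> hT < hR)"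
    by (rule strand_order[OF assms(1) cr(4) _ hT _ hR]) auto
  show False using 1 2 3 4 ct by (cases "ct (x,y)"; cases "ct (x+1,y)"; cases "ct (x,y+1)"; cases "ct (x+1,y+1)"; simp)
qed



definition over :: "edge2 set \<Rightarrow> (pt2 \<Rightarrow> bool) \<Rightarrow> edge2 \<Rightarrow> pt2 \<Rightarrow> bool" where
  "over E ct e c \<longleftrightarrow> e \<in> E \<and> crossing E c \<and> c \<in> ends2 e \<and> (ct c \<longleftrightarrow> snd e = X2)"
definition under :: "edge2 set \<Rightarrow> (pt2 \<Rightarrow> bool) \<Rightarrow> edge2 \<Rightarrow> pt2 \<Rightarrow> bool" where
  "under E ct e c \<longleftrightarrow> e \<in> E \<and> crossing E c \<and> c \<in> ends2 e \<and> (ct c \<longleftrightarrow> snd e = Y2)"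
definition Rel :: "edge2 set \<Rightarrow> (pt2 \<Rightarrow> bool) \<Rightarrow> (edge2 \<times> edge2) set" where
  "Rel E ct = {(e,f). \<exists>c. over E ct e c \<and> under E ct f c}"

definition stp :: "edge2 set \<Rightarrow> (pt2 \<Rightarrow> bool) \<Rightarrow> int \<Rightarrow> int \<Rightarrow> pt2 \<Rightarrow> pt2 \<Rightarrow> bool" where
  "stp E ct sx sy p q \<longleftrightarrow> crossing E p \<and> crossing E q \<and>
     ((q = (fst p + sx, snd p) \<and> ct q \<and> \<not> ct p) \<or> (q = (fst p, snd p + sy) \<and> \<not> ct q \<and> ct p))"

lemma step_lemma:
  assumes "under E ct f c" "over E ct f c'"
  shows "\<exists>s. \<bar>s\<bar> = 1 \<and> crossing E c \<and> crossing E c' \<and>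
     ((c' = (fst c + s, snd c) \<and> ct c' \<and> \<not> ct c) \<or> (c' = (fst c, snd c + s) \<and> \<not> ct c' \<and> ct c))"
proof -
  obtain a b D where f: "f = ((a,b),D)" by (metis prod.collapse)
  have X: "D = X2 \<Longrightarrow> ?thesis"
  proof -
    assume D: "D = X2"
    have "(c = (a,b) \<and> c' = (a+1,b)) \<or> (c = (a+1,b) \<and> c' = (a,b))"
      using assms unfolding under_def over_def f ends2_def D by auto
    thus ?thesis
    proof
      assume h: "c = (a,b) \<and> c' = (a+1,b)"
      show ?thesis using assms h unfolding under_def over_def f D by (intro exI[of _ 1]) auto
    next
      assume h: "c = (a+1,b) \<and> c' = (a,b)"
      show ?thesis using assms h unfolding under_def over_def f D by (intro exI[of _ "-1"]) auto
    qed
  qed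
  have Y: "D = Y2 \<Longrightarrow> ?thesis"
  proof -
    assume D: "D = Y2"
    have "(c = (a,b) \<and> c' = (a,b+1)) \<or> (c = (a,b+1) \<and> c' = (a,b))"
      using assms unfolding under_def over_def f ends2_def D by auto
    thus ?thesis
    proof
      assume h: "c = (a,b) \<and> c' = (a,b+1)"
      show ?thesis using assms h unfolding under_def over_def f D by (intro exI[of _ 1]) auto
    next
      assume h: "c = (a,b+1) \<and> c' = (a,b)"
      show ?thesis using assms h unfolding under_def over_def f D by (intro exI[of _ "-1"]) auto
    qed
  qed
  show ?thesis using X Y by (cases D) auto
qed

lemma celtic_sq:
  assumes "\<bar>s\<bar> = 1" "\<bar>t\<bar> = 1"
    "crossing E (x,y)" "crossing E (x+s,y)" "crossing E (x,y+t)" "crossing E (x+s,y+t)"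
    "ct (x,y) = ct (x+s,y+t)" "ct (x+s,y) = ct (x,y+t)" "ct (x,y) \<noteq> ct (x+s,y)"
  shows "celtic_configuration E ct"
proof -
  have s: "s = 1 \<or> s = -1" and t: "t = 1 \<or> t = -1" using assms(1,2) by auto
  show ?thesis using s t assms(3-9) unfolding celtic_configuration_def
    apply (elim disjE)
       apply (rule_tac x=x in exI, rule_tac x=y in exI, simp)
      apply (rule_tac x=x in exI, rule_tac x="y-1" in exI, simp)
     apply (rule_tac x="x-1" in exI, rule_tac x=y in exI, simp)
    apply (rule_tac x="x-1" in exI, rule_tac x="y-1" in exI, simp)
    done
qed



definition Inv :: "edge2 set \<Rightarrow> (pt2 \<Rightarrow> bool) \<Rightarrow> nat \<Rightarrow> edge2 \<Rightarrow> edge2 \<Rightarrow> bool" where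
  "Inv E ct n e f \<longleftrightarrow> (\<exists>c0 c sx sy a b. over E ct e c0 \<and> under E ct f c \<and> \<bar>sx\<bar> = 1 \<and> \<bar>sy\<bar> = 1 \<and>
     a \<ge> 0 \<and> b \<ge> 0 \<and> a + b = int n \<and> fst c = fst c0 + a*sx \<and> snd c = snd c0 + b*sy \<and>
     (n = 0 \<or> (n = 1 \<and> stp E ct sx sy c0 c) \<or> (n \<ge> 2 \<and> (\<exists>p pp. stp E ct sx sy pp p \<and> stp E ct sx sy p c))))"

lemma Inv_ext:
  assumes I: "Inv E ct n e f" and R: "(f,k) \<in> Rel E ct" and nc: "\<not> celtic_configuration E ct"
  shows "Inv E ct (Suc n) e k"
proof -
  from I obtain c0 c sx sy a b where ov: "over E ct e c0" and un: "under E ct f c"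
    and sx: "\<bar>sx\<bar> = 1" and sy: "\<bar>sy\<bar> = 1" and ab: "a \<ge> 0" "b \<ge> 0" "a + b = int n"
    and cx: "fst c = fst c0 + a*sx" and cy: "snd c = snd c0 + b*sy"
    and H: "n = 0 \<or> (n = 1 \<and> stp E ct sx sy c0 c) \<or> (n \<ge> 2 \<and> (\<exists>p pp. stp E ct sx sy pp p \<and> stp E ct sx sy p c))"
    unfolding Inv_def by blast
  from R obtain c' where ov': "over E ct f c'" and un': "under E ct k c'" unfolding Rel_def by blast
  from step_lemma[OF un ov'] obtain s where s: "\<bar>s\<bar> = 1" and cc: "crossing E c" "crossing E c'"
    and st: "(c' = (fst c + s, snd c) \<and> ct c' \<and> \<not> ct c) \<or> (c' = (fst c, snd c + s) \<and> \<not> ct c' \<and> ct c)"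
    by blast
  from H consider (z) "n = 0" | (o) "n = 1" "stp E ct sx sy c0 c"
    | (m) p pp where "n \<ge> 2" "stp E ct sx sy pp p" "stp E ct sx sy p c" by blast
  then show ?thesis
  proof cases
    case z
    then have ab0: "a = 0" "b = 0" using ab by auto
    then have c0: "c = c0" using cx cy by (simp add: prod_eq_iff)
    from st show ?thesis
    proof
      assume h: "c' = (fst c + s, snd c) \<and> ct c' \<and> \<not> ct c"
      show ?thesis unfolding Inv_def
        apply (rule exI[of _ c0], rule exI[of _ c'], rule exI[of _ s], rule exI[of _ sy],
               rule exI[of _ 1], rule exI[of _ 0])
        using ov un' s sy h z c0 cc by (auto simp: stp_def)
    next
      assume h: "c' = (fst c, snd c + s) \<and> \<not> ct c' \<and> ct c"
      show ?thesis unfolding Inv_def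
        apply (rule exI[of _ c0], rule exI[of _ c'], rule exI[of _ sx], rule exI[of _ s],
               rule exI[of _ 0], rule exI[of _ 1])
        using ov un' s sx h z c0 cc by (auto simp: stp_def)
    qed
  next
    case o
    from o(2) consider (ox) "c = (fst c0 + sx, snd c0)" "ct c" "\<not> ct c0" "crossing E c0"
      | (oy) "c = (fst c0, snd c0 + sy)" "\<not> ct c" "ct c0" "crossing E c0"
      unfolding stp_def by blast
    then show ?thesis
    proof cases
      case ox
      with st have h: "c' = (fst c, snd c + s)" "\<not> ct c'" by auto
      show ?thesis unfolding Inv_def
        apply (rule exI[of _ c0], rule exI[of _ c'], rule exI[of _ sx], rule exI[of _ s],
               rule exI[of _ 1], rule exI[of _ 1])
        using ov un' s sx h o ox cc by (auto simp: stp_def)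
    next
      case oy
      with st have h: "c' = (fst c + s, snd c)" "ct c'" by auto
      show ?thesis unfolding Inv_def
        apply (rule exI[of _ c0], rule exI[of _ c'], rule exI[of _ s], rule exI[of _ sy],
               rule exI[of _ 1], rule exI[of _ 1])
        using ov un' s sy h o oy cc by (auto simp: stp_def)
    qed
  next
    case m
    from m(3) consider (mx) "c = (fst p + sx, snd p)" "ct c" "\<not> ct p" "crossing E p"
      | (my) "c = (fst p, snd p + sy)" "\<not> ct c" "ct p" "crossing E p"
      unfolding stp_def by blast
    then show ?thesis
    proof cases
      case mx
      with m(2) have pp: "p = (fst pp, snd pp + sy)" "ct pp" "crossing E pp"
        unfolding stp_def by auto
      from mx st have h: "c' = (fst c, snd c + s)" "\<not> ct c'" by auto
      have "s = sy"
      proof (rule ccontr)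
        assume "s \<noteq> sy"
        with s sy have "s = - sy" by auto
        have "celtic_configuration E ct"
          apply (rule celtic_sq[of sx sy E "fst pp" "snd pp"])
          using sx sy pp mx h cc \<open>s = - sy\<close> by auto
        with nc show False by simp
      qed
      have st2: "stp E ct sx sy c c'" using h cc mx \<open>s = sy\<close> by (auto simp: stp_def)
      have hist: "\<exists>p pp. stp E ct sx sy pp p \<and> stp E ct sx sy p c'" using m(3) st2 by blast
      show ?thesis unfolding Inv_def
        apply (rule exI[of _ c0], rule exI[of _ c'], rule exI[of _ sx], rule exI[of _ sy],
               rule exI[of _ a], rule exI[of _ "b+1"])
        using ov un' sx sy h m(1) ab cx cy hist \<open>s = sy\<close> by (auto simp: algebra_simps)
    next
      case my
      with m(2) have pp: "p = (fst pp + sx, snd pp)" "\<not> ct pp" "crossing E pp"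
        unfolding stp_def by auto
      from my st have h: "c' = (fst c + s, snd c)" "ct c'" by auto
      have "s = sx"
      proof (rule ccontr)
        assume "s \<noteq> sx"
        with s sx have "s = - sx" by auto
        have "celtic_configuration E ct"
          apply (rule celtic_sq[of sx sy E "fst pp" "snd pp"])
          using sx sy pp my h cc \<open>s = - sx\<close> by auto
        with nc show False by simp
      qed
      have st2: "stp E ct sx sy c c'" using h cc my \<open>s = sx\<close> by (auto simp: stp_def)
      have hist: "\<exists>p pp. stp E ct sx sy pp p \<and> stp E ct sx sy p c'" using m(3) st2 by blast
      show ?thesis unfolding Inv_def
        apply (rule exI[of _ c0], rule exI[of _ c'], rule exI[of _ sx], rule exI[of _ sy],
               rule exI[of _ "a+1"], rule exI[of _ b])
        using ov un' sx sy h m(1) ab cx cy hist \<open>s = sx\<close> by (auto simp: algebra_simps)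
    qed
  qed
qed



lemma Inv_relpow:
  assumes nc: "\<not> celtic_configuration E ct"
  shows "(e,f) \<in> (Rel E ct) ^^ (Suc n) \<Longrightarrow> Inv E ct n e f"
proof (induction n arbitrary: f)
  case 0
  then have "(e,f) \<in> Rel E ct" by simp
  then obtain c where "over E ct e c" "under E ct f c" unfolding Rel_def by blast
  then show ?case unfolding Inv_def
    by (intro exI[of _ c] exI[of _ "1::int"] exI[of _ "0::int"]) auto
next
  case (Suc n)
  from Suc.prems obtain g where "(e,g) \<in> (Rel E ct) ^^ Suc n" "(g,f) \<in> Rel E ct"
    by (meson relpow_Suc_E)
  then show ?case using Suc.IH Inv_ext nc by blast
qed

lemma finite_verts2: "finite E \<Longrightarrow> finite (verts2 E)"
  unfolding verts2_def ends2_def by auto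

lemma crossing_verts: "crossing E c \<Longrightarrow> c \<in> verts2 E"
  unfolding crossing_def by simp

lemma Inv_bound:
  assumes fin: "finite E"
  shows "\<exists>B. \<forall>n e f. Inv E ct n e f \<longrightarrow> n \<le> B"
proof -
  define V where "V = verts2 E"
  have fV: "finite V" using fin finite_verts2 V_def by blast
  define M where "M = Max (insert 0 ((\<lambda>p. \<bar>fst p\<bar> + \<bar>snd p\<bar>) ` V))"
  have M: "\<And>p. p \<in> V \<Longrightarrow> \<bar>fst p\<bar> + \<bar>snd p\<bar> \<le> M"
    unfolding M_def using fV by (intro Max_ge) auto
  have "\<forall>n e f. Inv E ct n e f \<longrightarrow> n \<le> nat (2*M)"
  proof (intro allI impI)
    fix n e f assume "Inv E ct n e f"
    then obtain c0 c sx sy a b where ov: "over E ct e c0" and un: "under E ct f c"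
      and sx: "\<bar>sx\<bar> = 1" and sy: "\<bar>sy\<bar> = 1" and ab: "a \<ge> 0" "b \<ge> 0" "a + b = int n"
      and cx: "fst c = fst c0 + a*sx" and cy: "snd c = snd c0 + b*sy"
      unfolding Inv_def by blast
    have "c0 \<in> V" "c \<in> V" using ov un crossing_verts unfolding over_def under_def V_def by auto
    then have m: "\<bar>fst c0\<bar> + \<bar>snd c0\<bar> \<le> M" "\<bar>fst c\<bar> + \<bar>snd c\<bar> \<le> M" using M by auto
    have "\<bar>a*sx\<bar> = a" "\<bar>b*sy\<bar> = b" using sx sy ab by (auto simp: abs_mult)
    then have "a \<le> \<bar>fst c\<bar> + \<bar>fst c0\<bar>" "b \<le> \<bar>snd c\<bar> + \<bar>snd c0\<bar>" using cx cy by linarith+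
    then show "n \<le> nat (2*M)" using m ab by linarith
  qed
  then show ?thesis by blast
qed

lemma relpow_mult: "(e,e) \<in> R ^^ k \<Longrightarrow> (e,e) \<in> R ^^ (k*m)"
proof (induction m)
  case 0 then show ?case by simp
next
  case (Suc m)
  then have "(e,e) \<in> R ^^ (k*m) O R ^^ k" by blast
  then show ?case by (simp add: relpow_add[symmetric] add.commute)
qed

lemma acyclic_Rel:
  assumes fin: "finite E" and nc: "\<not> celtic_configuration E ct"
  shows "(e,e) \<notin> (Rel E ct)\<^sup>+"
proof
  assume "(e,e) \<in> (Rel E ct)\<^sup>+"
  then obtain k where k: "k > 0" "(e,e) \<in> (Rel E ct) ^^ k" by (meson trancl_power)
  obtain B where B: "\<And>n e f. Inv E ct n e f \<Longrightarrow> n \<le> B" using Inv_bound[OF fin] by blast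
  have "(e,e) \<in> (Rel E ct) ^^ (k * (B+2))" by (rule relpow_mult[OF k(2)])
  moreover have "k * (B+2) = Suc (k*(B+2) - 1)" using k(1) by simp
  ultimately have "Inv E ct (k*(B+2) - 1) e e" using Inv_relpow[OF nc] by metis
  then have "k*(B+2) - 1 \<le> B" using B by blast
  moreover have "B+2 \<le> k*(B+2)" using mult_le_mono1[of 1 k "B+2"] k(1) by simp
  ultimately show False by linarith
qed



lemma ends3_lift: "(x,y,z) \<in> ends3 (lift e z') \<longleftrightarrow> z = z' \<and> (x,y) \<in> ends2 e"
  apply (cases e) apply (case_tac a) apply (case_tac b)
  apply (auto simp: ends3_def ends2_def)
  done

lemma ends3_Z: "(x,y,z) \<in> ends3 ((a,b,c),Z3) \<longleftrightarrow> a = x \<and> b = y \<and> (c = z \<or> c = z - 1)"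
  by (auto simp: ends3_def)

lemma lift_not_Z: "snd (lift e z) \<noteq> Z3"
  apply (cases e) apply (case_tac a) apply (case_tac b) by auto

lemma lift_inj: "lift e z = lift e' z' \<longleftrightarrow> e = e' \<and> z = z'"
proof -
  obtain a b D where e: "e = ((a,b),D)" by (metis prod.collapse)
  obtain a' b' D' where e': "e' = ((a',b'),D')" by (metis prod.collapse)
  show ?thesis unfolding e e' by (cases D; cases D') auto
qed

lemma lift_ends_proj: "(x,y,z) \<in> ends3 (lift e z') \<Longrightarrow> (x,y) \<in> ends2 e"
  by (simp add: ends3_lift)

definition gX :: "pt2 \<Rightarrow> edge2 set" where
  "gX v = {((fst v - 1, snd v), X2), ((fst v, snd v), X2)}"
definition gY :: "pt2 \<Rightarrow> edge2 set" where
  "gY v = {((fst v, snd v - 1), Y2), ((fst v, snd v), Y2)}"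

lemma inc_gXY: "inc v = gX v \<union> gY v" by (auto simp: inc_def gX_def gY_def)
lemma gXY_disj: "gX v \<inter> gY v = {}" by (auto simp: gX_def gY_def)

definition lo :: "(edge2 \<Rightarrow> int) \<Rightarrow> edge2 set \<Rightarrow> int" where "lo h A = Min (h ` A)"
definition hi :: "(edge2 \<Rightarrow> int) \<Rightarrow> edge2 set \<Rightarrow> int" where "hi h A = Max (h ` A)"

definition cnt :: "(edge2 \<Rightarrow> int) \<Rightarrow> edge2 set \<Rightarrow> int \<Rightarrow> nat" where
  "cnt h A z = card {e\<in>A. h e = z} + (if lo h A \<le> z \<and> z < hi h A then 1 else 0)
     + (if lo h A \<le> z - 1 \<and> z - 1 < hi h A then 1 else 0)"

lemma lohi2: "lo h {e1,e2} = min (h e1) (h e2)" "hi h {e1,e2} = max (h e1) (h e2)"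
  by (auto simp: lo_def hi_def)

lemma cnt2: assumes "e1 \<noteq> e2"
  shows "cnt h {e1,e2} z = (if lo h {e1,e2} \<le> z \<and> z \<le> hi h {e1,e2} then 2 else 0)"
proof -
  have "{e\<in>{e1,e2}. h e = z} = (if h e1 = z then {e1} else {}) \<union> (if h e2 = z then {e2} else {})"
    by auto
  then have "card {e\<in>{e1,e2}. h e = z} = (if h e1 = z then 1 else 0) + (if h e2 = z then 1 else 0)"
    using assms by auto
  then show ?thesis unfolding cnt_def lohi2 by (auto simp: min_def max_def)
qed



lemma lift_neqZ: "lift e z \<noteq> (p, Z3)"
  using lift_not_Z[of e z] by (metis snd_conv)

lemma lift_neqZ': "(p, Z3) \<noteq> lift e z"
  using lift_neqZ by metis

definition grps :: "edge2 set \<Rightarrow> pt2 \<Rightarrow> edge2 set set" where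
  "grps E v = (if crossing E v then {gX v, gY v} else {E \<inter> inc v})"

definition zin :: "edge2 set \<Rightarrow> (edge2 \<Rightarrow> int) \<Rightarrow> pt2 \<Rightarrow> int \<Rightarrow> bool" where
  "zin E h v z \<longleftrightarrow> v \<in> verts2 E \<and> (\<exists>A\<in>grps E v. lo h A \<le> z \<and> z < hi h A)"

definition Lset :: "edge2 set \<Rightarrow> (edge2 \<Rightarrow> int) \<Rightarrow> edge3 set" where
  "Lset E h = (\<lambda>e. lift e (h e)) ` E \<union> {((x,y,z),Z3) | x y z. zin E h (x,y) z}"

lemma Lstar: "{e\<in>Lset E h. (x,y,z) \<in> ends3 e} =
   (\<lambda>e. lift e z) ` {e \<in> E \<inter> inc (x,y). h e = z} \<union>
   ((if zin E h (x,y) (z-1) then {((x,y,z-1),Z3)} else {}) \<union> (if zin E h (x,y) z then {((x,y,z),Z3)} else {}))"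
  (is "?L = ?R")
proof
  show "?L \<subseteq> ?R"
  proof
    fix e assume "e \<in> ?L"
    then have e: "e \<in> Lset E h" "(x,y,z) \<in> ends3 e" by auto
    from e(1) consider (h) e' where "e' \<in> E" "e = lift e' (h e')" | (z) a b c where "e = ((a,b,c),Z3)" "zin E h (a,b) c"
      unfolding Lset_def by blast
    then show "e \<in> ?R"
    proof cases
      case h then show ?thesis using e(2) by (auto simp: ends3_lift mem_ends2)
    next
      case z then show ?thesis using e(2) by (auto simp: ends3_Z)
    qed
  qed
next
  show "?R \<subseteq> ?L"
  proof
    fix e assume "e \<in> ?R"
    then consider (h) e' where "e' \<in> E" "e' \<in> inc (x,y)" "h e' = z" "e = lift e' z"
      | (z1) "zin E h (x,y) (z-1)" "e = ((x,y,z-1),Z3)" | (z2) "zin E h (x,y) z" "e = ((x,y,z),Z3)"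
      by (auto split: if_splits)
    then show "e \<in> ?L"
    proof cases
      case h
      then have "e \<in> Lset E h" unfolding Lset_def by force
      moreover have "(x,y,z) \<in> ends3 e" using h by (simp add: ends3_lift mem_ends2)
      ultimately show ?thesis by simp
    next
      case z1 then show ?thesis by (auto simp: Lset_def ends3_def)
    next
      case z2 then show ?thesis by (auto simp: Lset_def ends3_def)
    qed
  qed
qed

lemma card_Lstar: "card {e\<in>Lset E h. (x,y,z) \<in> ends3 e} =
   card {e \<in> E \<inter> inc (x,y). h e = z} + (if zin E h (x,y) (z-1) then 1 else 0) + (if zin E h (x,y) z then 1 else 0)"
proof -
  have f: "finite (inc (x,y))" by (simp add: inc_def)
  have inj: "inj_on (\<lambda>e. lift e z) {e \<in> E \<inter> inc (x,y). h e = z}" by (auto simp: inj_on_def lift_inj)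
  have c1: "card ((\<lambda>e. lift e z) ` {e \<in> E \<inter> inc (x,y). h e = z}) = card {e \<in> E \<inter> inc (x,y). h e = z}"
    by (rule card_image[OF inj])
  have d: "(\<lambda>e. lift e z) ` {e \<in> E \<inter> inc (x,y). h e = z} \<inter>
   ((if zin E h (x,y) (z-1) then {((x,y,z-1),Z3)} else {}) \<union> (if zin E h (x,y) z then {((x,y,z),Z3)} else {})) = {}"
    using lift_neqZ' by auto
  show ?thesis unfolding Lstar
    apply (subst card_Un_disjoint)
    using f d c1 by auto
qed



definition SEP :: "edge2 set \<Rightarrow> (pt2 \<Rightarrow> bool) \<Rightarrow> (edge2 \<Rightarrow> int) \<Rightarrow> bool" where
  "SEP E ct h \<longleftrightarrow> (\<forall>c. crossing E c \<longrightarrow>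
     (ct c \<longrightarrow> hi h (gY c) < lo h (gX c)) \<and> (\<not> ct c \<longrightarrow> hi h (gX c) < lo h (gY c)))"

lemma noncross_two:
  assumes "lattice_diagram E" "v \<in> verts2 E" "\<not> crossing E v"
  shows "\<exists>e1 e2. e1 \<noteq> e2 \<and> E \<inter> inc v = {e1,e2}"
proof -
  have "deg2 E v = 2" using assms unfolding lattice_diagram_def crossing_def by auto
  then have "card (E \<inter> inc v) = 2" by (simp add: deg2_inc)
  then show ?thesis by (meson card_2_iff)
qed

lemma deg_formula:
  assumes ld: "lattice_diagram E" and sep: "SEP E ct h" and v: "(x,y) \<in> verts2 E"
  shows "card {e\<in>Lset E h. (x,y,z) \<in> ends3 e} =
     (if \<exists>A\<in>grps E (x,y). lo h A \<le> z \<and> z \<le> hi h A then 2 else 0)"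
proof (cases "crossing E (x,y)")
  case False
  then obtain e1 e2 where e: "e1 \<noteq> e2" "E \<inter> inc (x,y) = {e1,e2}"
    using noncross_two[OF ld v] by blast
  have g: "grps E (x,y) = {{e1,e2}}" using False e by (simp add: grps_def)
  have zi: "\<And>t. zin E h (x,y) t \<longleftrightarrow> lo h {e1,e2} \<le> t \<and> t < hi h {e1,e2}"
    using v g by (simp add: zin_def)
  have "card {e\<in>Lset E h. (x,y,z) \<in> ends3 e} = cnt h {e1,e2} z"
    unfolding card_Lstar cnt_def zi e(2) by simp
  then show ?thesis using cnt2[OF e(1)] g by simp
next
  case True
  have inc: "E \<inter> inc (x,y) = gX (x,y) \<union> gY (x,y)" using crossing_inc[OF True] inc_gXY by blast
  have g: "grps E (x,y) = {gX (x,y), gY (x,y)}" using True by (simp add: grps_def)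
  have zi: "\<And>t. zin E h (x,y) t \<longleftrightarrow> (lo h (gX (x,y)) \<le> t \<and> t < hi h (gX (x,y))) \<or>
      (lo h (gY (x,y)) \<le> t \<and> t < hi h (gY (x,y)))"
    using v g by (auto simp: zin_def)
  have c: "card {e \<in> E \<inter> inc (x,y). h e = z} = card {e\<in>gX (x,y). h e = z} + card {e\<in>gY (x,y). h e = z}"
  proof -
    have "{e \<in> E \<inter> inc (x,y). h e = z} = {e\<in>gX (x,y). h e = z} \<union> {e\<in>gY (x,y). h e = z}"
      using inc by auto
    moreover have "finite (gX (x,y))" "finite (gY (x,y))" by (auto simp: gX_def gY_def)
    ultimately show ?thesis using gXY_disj[of "(x,y)"] by (subst card_Un_disjoint[symmetric]) auto
  qed
  have s: "hi h (gY (x,y)) < lo h (gX (x,y)) \<or> hi h (gX (x,y)) < lo h (gY (x,y))"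
    using sep True unfolding SEP_def by blast
  have "card {e\<in>Lset E h. (x,y,z) \<in> ends3 e} = cnt h (gX (x,y)) z + cnt h (gY (x,y)) z"
    unfolding card_Lstar cnt_def zi c using s by auto
  also have "\<dots> = (if lo h (gX (x,y)) \<le> z \<and> z \<le> hi h (gX (x,y)) then 2 else 0) +
     (if lo h (gY (x,y)) \<le> z \<and> z \<le> hi h (gY (x,y)) then 2 else 0)"
    unfolding gX_def gY_def by (simp add: cnt2)
  finally show ?thesis using s g by auto
qed



lemma finite_grps: "finite (grps E v)" by (simp add: grps_def)

lemma finite_Lset:
  assumes "finite E"
  shows "finite (Lset E h)"
proof -
  have "{((x,y,z),Z3) | x y z. zin E h (x,y) z} \<subseteq>
    (\<Union>v\<in>verts2 E. \<Union>A\<in>grps E v. (\<lambda>z. ((fst v, snd v, z), Z3)) ` {lo h A..<hi h A})"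
  proof
    fix e assume "e \<in> {((x,y,z),Z3) | x y z. zin E h (x,y) z}"
    then obtain x y z where e: "e = ((x,y,z),Z3)" "zin E h (x,y) z" by blast
    then obtain A where A: "(x,y) \<in> verts2 E" "A \<in> grps E (x,y)" "z \<in> {lo h A..<hi h A}"
      unfolding zin_def by auto
    show "e \<in> (\<Union>v\<in>verts2 E. \<Union>A\<in>grps E v. (\<lambda>z. ((fst v, snd v, z), Z3)) ` {lo h A..<hi h A})"
      apply (rule UN_I[OF A(1)]) apply (rule UN_I[OF A(2)]) using A(3) e(1) by simp
  qed
  moreover have "finite (\<Union>v\<in>verts2 E. \<Union>A\<in>grps E v. (\<lambda>z. ((fst v, snd v, z), Z3)) ` {lo h A..<hi h A})"
    using finite_verts2[OF assms] finite_grps by blast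
  ultimately have "finite {((x,y,z),Z3) | x y z. zin E h (x,y) z}" by (rule finite_subset)
  then show ?thesis unfolding Lset_def using assms by simp
qed

lemma verts3_iff: "p \<in> verts3 L \<longleftrightarrow> {e\<in>L. p \<in> ends3 e} \<noteq> {}"
  unfolding verts3_def by auto

lemma verts3_proj:
  assumes "(x,y,z) \<in> verts3 (Lset E h)" shows "(x,y) \<in> verts2 E"
proof -
  from assms obtain e where e: "e \<in> Lset E h" "(x,y,z) \<in> ends3 e" unfolding verts3_def by auto
  from e(1) consider (h) e' where "e' \<in> E" "e = lift e' (h e')" | (z) a b c where "e = ((a,b,c),Z3)" "zin E h (a,b) c"
    unfolding Lset_def by blast
  then show ?thesis
  proof cases
    case h then show ?thesis using e(2) unfolding verts2_def by (auto simp: ends3_lift)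
  next
    case z then show ?thesis using e(2) by (auto simp: ends3_Z zin_def)
  qed
qed

lemma fibV_iff:
  assumes ld: "lattice_diagram E" and sep: "SEP E ct h" and v: "(x,y) \<in> verts2 E"
  shows "(x,y,z) \<in> verts3 (Lset E h) \<longleftrightarrow> (\<exists>A\<in>grps E (x,y). lo h A \<le> z \<and> z \<le> hi h A)"
proof -
  have fin: "finite {e\<in>Lset E h. (x,y,z) \<in> ends3 e}"
    using finite_Lset ld unfolding lattice_diagram_def by auto
  have "{e\<in>Lset E h. (x,y,z) \<in> ends3 e} \<noteq> {} \<longleftrightarrow> card {e\<in>Lset E h. (x,y,z) \<in> ends3 e} \<noteq> 0"
    using fin by auto
  then show ?thesis unfolding verts3_iff deg_formula[OF ld sep v, of z] by simp
qed

lemma fibE_iff: "((x,y,z),Z3) \<in> Lset E h \<longleftrightarrow> zin E h (x,y) z"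
  unfolding Lset_def using lift_neqZ' by auto

lemma lift_in_Lset: "lift e z \<in> Lset E h \<longleftrightarrow> e \<in> E \<and> z = h e"
  unfolding Lset_def using lift_neqZ by (auto simp: lift_inj)

lemma grp_bounds: "e \<in> A \<Longrightarrow> finite A \<Longrightarrow> lo h A \<le> h e \<and> h e \<le> hi h A"
  unfolding lo_def hi_def by auto



lemma lohi_le: "A \<noteq> {} \<Longrightarrow> finite A \<Longrightarrow> lo h A \<le> hi h A"
  unfolding lo_def hi_def by (meson Max_ge Min_le_iff all_not_in_conv finite_imageI image_eqI image_is_empty order_refl)

lemma construct:
  assumes ld: "lattice_diagram E" and sep: "SEP E ct h"
  shows "proper_lift (Lset E h) E ct"
proof -
  let ?L = "Lset E h"
  have finE: "finite E" "E \<noteq> {}" using ld unfolding lattice_diagram_def by auto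
  have finL: "finite ?L" using finite_Lset finE by blast
  have fgX: "finite (gX c)" "gX c \<noteq> {}" "finite (gY c)" "gY c \<noteq> {}" for c by (auto simp: gX_def gY_def)
  have link: "lattice_link ?L"
    unfolding lattice_link_def
  proof (intro conjI ballI)
    show "finite ?L" by fact
    show "?L \<noteq> {}" using finE unfolding Lset_def by auto
  next
    fix p assume p: "p \<in> verts3 ?L"
    obtain x y z where pe: "p = (x,y,z)" by (metis prod.collapse)
    have v: "(x,y) \<in> verts2 E" using verts3_proj p pe by blast
    have "card {e\<in>?L. p \<in> ends3 e} \<noteq> 0" using p finL unfolding verts3_iff by auto
    then show "deg3 ?L p = 2" unfolding deg3_def pe using deg_formula[OF ld sep v, of z] pe
      by (auto split: if_splits)
  qed
  have c2: "\<forall>e3\<in>?L. snd e3 \<noteq> Z3 \<longrightarrow> (\<exists>e\<in>E. \<exists>h. e3 = lift e h)"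
    unfolding Lset_def by auto
  have c3: "\<forall>e\<in>E. \<exists>!h'. lift e h' \<in> ?L" using lift_in_Lset by auto
  have c4: "\<forall>x y z. (x,y,z) \<in> verts3 ?L \<longrightarrow> (x,y) \<in> verts2 E" using verts3_proj by blast
  have c5: "\<forall>v\<in>verts2 E. \<not> crossing E v \<longrightarrow> (\<exists>a b. is_stick_fibre ?L v a b)"
  proof (intro ballI impI)
    fix v assume v: "v \<in> verts2 E" and nc: "\<not> crossing E v"
    obtain x y where ve: "v = (x,y)" by (metis prod.collapse)
    obtain e1 e2 where e: "e1 \<noteq> e2" "E \<inter> inc v = {e1,e2}" using noncross_two[OF ld v nc] by blast
    have g: "grps E v = {{e1,e2}}" using nc e by (simp add: grps_def)
    have "is_stick_fibre ?L v (lo h {e1,e2}) (hi h {e1,e2})"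
      unfolding is_stick_fibre_def fibV_def fibE_def
      using fibV_iff[OF ld sep v[unfolded ve]] fibE_iff[of x y _ E h] lohi_le[of "{e1,e2}" h] g v ve
      by (auto simp: zin_def)
    then show "\<exists>a b. is_stick_fibre ?L v a b" by blast
  qed
  have c6: "\<forall>c. crossing E c \<longrightarrow> (\<exists>a1 b1 a2 b2. is_two_stick_fibre ?L c a1 b1 a2 b2 \<and>
        ((ct c \<and> x_strand_in ?L c {a2..b2} \<and> y_strand_in ?L c {a1..b1}) \<or>
         (\<not> ct c \<and> y_strand_in ?L c {a2..b2} \<and> x_strand_in ?L c {a1..b1})))"
  proof (intro allI impI)
    fix c assume cr: "crossing E c"
    obtain x y where ce: "c = (x,y)" by (metis prod.collapse)
    have v: "c \<in> verts2 E" using cr crossing_verts by blast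
    have g: "grps E c = {gX c, gY c}" using cr by (simp add: grps_def)
    have inE: "gX c \<subseteq> E" "gY c \<subseteq> E" using crossing_inc[OF cr] inc_gXY by auto
    have fV: "fibV ?L c = {lo h (gX c)..hi h (gX c)} \<union> {lo h (gY c)..hi h (gY c)}"
      unfolding fibV_def using fibV_iff[OF ld sep v[unfolded ce]] g ce by auto
    have fE: "fibE ?L c = {lo h (gX c)..<hi h (gX c)} \<union> {lo h (gY c)..<hi h (gY c)}"
      unfolding fibE_def using fibE_iff[of x y _ E h] v g ce by (auto simp: zin_def)
    have xs: "x_strand_in ?L c {lo h (gX c)..hi h (gX c)}"
      unfolding x_strand_in_def lifted_in_def lift_in_Lset
      using grp_bounds[OF _ fgX(1), of _ c h] by (auto simp: gX_def)
    have ys: "y_strand_in ?L c {lo h (gY c)..hi h (gY c)}"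
      unfolding y_strand_in_def lifted_in_def lift_in_Lset
      using grp_bounds[OF _ fgX(3), of _ c h] by (auto simp: gY_def)
    have le: "lo h (gX c) \<le> hi h (gX c)" "lo h (gY c) \<le> hi h (gY c)"
      using lohi_le fgX by auto
    have s: "(ct c \<longrightarrow> hi h (gY c) < lo h (gX c)) \<and> (\<not> ct c \<longrightarrow> hi h (gX c) < lo h (gY c))"
      using sep cr unfolding SEP_def by blast
    show "\<exists>a1 b1 a2 b2. is_two_stick_fibre ?L c a1 b1 a2 b2 \<and>
        ((ct c \<and> x_strand_in ?L c {a2..b2} \<and> y_strand_in ?L c {a1..b1}) \<or>
         (\<not> ct c \<and> y_strand_in ?L c {a2..b2} \<and> x_strand_in ?L c {a1..b1}))"
    proof (cases "ct c")
      case True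
      show ?thesis
        apply (rule exI[of _ "lo h (gY c)"], rule exI[of _ "hi h (gY c)"],
               rule exI[of _ "lo h (gX c)"], rule exI[of _ "hi h (gX c)"])
        unfolding is_two_stick_fibre_def using True s le fV fE xs ys by auto
    next
      case False
      show ?thesis
        apply (rule exI[of _ "lo h (gX c)"], rule exI[of _ "hi h (gX c)"],
               rule exI[of _ "lo h (gY c)"], rule exI[of _ "hi h (gY c)"])
        unfolding is_two_stick_fibre_def using False s le fV fE xs ys by auto
    qed
  qed
  show ?thesis unfolding proper_lift_def using link c2 c3 c4 c5 c6 by blast
qed



definition hgt :: "edge2 set \<Rightarrow> (pt2 \<Rightarrow> bool) \<Rightarrow> edge2 \<Rightarrow> int" where
  "hgt E ct e = int (card {g. (e,g) \<in> (Rel E ct)\<^sup>+})"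

lemma Rel_sub: "Rel E ct \<subseteq> E \<times> E"
  unfolding Rel_def over_def under_def by auto

lemma hgt_lt:
  assumes fin: "finite E" and nc: "\<not> celtic_configuration E ct" and r: "(e,f) \<in> Rel E ct"
  shows "hgt E ct f < hgt E ct e"
proof -
  have tr: "(Rel E ct)\<^sup>+ \<subseteq> E \<times> E" using Rel_sub trancl_subset_Sigma by blast
  have fin2: "finite {g. (e,g) \<in> (Rel E ct)\<^sup>+}"
    by (rule finite_subset[of _ E]) (use tr fin in auto)
  have "{g. (f,g) \<in> (Rel E ct)\<^sup>+} \<subset> {g. (e,g) \<in> (Rel E ct)\<^sup>+}"
  proof
    show "{g. (f,g) \<in> (Rel E ct)\<^sup>+} \<subseteq> {g. (e,g) \<in> (Rel E ct)\<^sup>+}"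
      using r by (auto intro: trancl_into_trancl2)
    have "f \<in> {g. (e,g) \<in> (Rel E ct)\<^sup>+}" using r by auto
    moreover have "f \<notin> {g. (f,g) \<in> (Rel E ct)\<^sup>+}" using acyclic_Rel[OF fin nc] by auto
    ultimately show "{g. (f,g) \<in> (Rel E ct)\<^sup>+} \<noteq> {g. (e,g) \<in> (Rel E ct)\<^sup>+}" by blast
  qed
  then have "card {g. (f,g) \<in> (Rel E ct)\<^sup>+} < card {g. (e,g) \<in> (Rel E ct)\<^sup>+}"
    using fin2 by (rule psubset_card_mono[rotated])
  then show ?thesis unfolding hgt_def by simp
qed

lemma SEP_hgt:
  assumes fin: "finite E" and nc: "\<not> celtic_configuration E ct"
  shows "SEP E ct (hgt E ct)"
  unfolding SEP_def
proof (intro allI impI)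
  fix c assume cr: "crossing E c"
  have inE: "inc c \<subseteq> E" using crossing_inc[OF cr] .
  have R: "\<And>e f. e \<in> inc c \<Longrightarrow> f \<in> inc c \<Longrightarrow> (ct c \<longleftrightarrow> snd e = X2) \<Longrightarrow> (ct c \<longleftrightarrow> snd f = Y2) \<Longrightarrow>
     hgt E ct f < hgt E ct e"
  proof -
    fix e f assume a: "e \<in> inc c" "f \<in> inc c" "(ct c \<longleftrightarrow> snd e = X2)" "(ct c \<longleftrightarrow> snd f = Y2)"
    have "(e,f) \<in> Rel E ct" unfolding Rel_def over_def under_def
      using a inE cr mem_ends2 by blast
    then show "hgt E ct f < hgt E ct e" using hgt_lt[OF fin nc] by blast
  qed
  let ?h = "hgt E ct"
  have i: "((fst c - 1, snd c), X2) \<in> inc c" "((fst c, snd c), X2) \<in> inc c"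
     "((fst c, snd c - 1), Y2) \<in> inc c" "((fst c, snd c), Y2) \<in> inc c" by (auto simp: inc_def)
  have a: "ct c \<longrightarrow> hi ?h (gY c) < lo ?h (gX c)"
  proof
    assume t: "ct c"
    have "?h ((fst c, snd c - 1), Y2) < ?h ((fst c - 1, snd c), X2)" by (rule R[OF i(1) i(3)]) (use t in auto)
    moreover have "?h ((fst c, snd c - 1), Y2) < ?h ((fst c, snd c), X2)" by (rule R[OF i(2) i(3)]) (use t in auto)
    moreover have "?h ((fst c, snd c), Y2) < ?h ((fst c - 1, snd c), X2)" by (rule R[OF i(1) i(4)]) (use t in auto)
    moreover have "?h ((fst c, snd c), Y2) < ?h ((fst c, snd c), X2)" by (rule R[OF i(2) i(4)]) (use t in auto)
    ultimately show "hi ?h (gY c) < lo ?h (gX c)" unfolding gX_def gY_def lohi2 by simp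
  qed
  have b: "\<not> ct c \<longrightarrow> hi ?h (gX c) < lo ?h (gY c)"
  proof
    assume t: "\<not> ct c"
    have "?h ((fst c - 1, snd c), X2) < ?h ((fst c, snd c - 1), Y2)" by (rule R[OF i(3) i(1)]) (use t in auto)
    moreover have "?h ((fst c, snd c), X2) < ?h ((fst c, snd c - 1), Y2)" by (rule R[OF i(3) i(2)]) (use t in auto)
    moreover have "?h ((fst c - 1, snd c), X2) < ?h ((fst c, snd c), Y2)" by (rule R[OF i(4) i(1)]) (use t in auto)
    moreover have "?h ((fst c, snd c), X2) < ?h ((fst c, snd c), Y2)" by (rule R[OF i(4) i(2)]) (use t in auto)
    ultimately show "hi ?h (gX c) < lo ?h (gY c)" unfolding gX_def gY_def lohi2 by simp
  qed
  from a b show "(ct c \<longrightarrow> hi ?h (gY c) < lo ?h (gX c)) \<and> (\<not> ct c \<longrightarrow> hi ?h (gX c) < lo ?h (gY c))" by blast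
qed

theorem theorem2p4:
  fixes E :: "edge2 set" and ct :: "pt2 \<Rightarrow> bool"
  assumes "lattice_diagram E"
  shows "(\<exists>L. proper_lift L E ct) \<longleftrightarrow> \<not> celtic_configuration E ct"
proof
  assume "\<exists>L. proper_lift L E ct"
  then show "\<not> celtic_configuration E ct" using lift_direction assms by blast
next
  assume nc: "\<not> celtic_configuration E ct"
  have "finite E" using assms unfolding lattice_diagram_def by simp
  then show "\<exists>L. proper_lift L E ct" using construct[OF assms SEP_hgt[OF _ nc]] by blast
qed

end
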